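(* Let $m\in\mathbb{N}$ and let $V=\sum_{k\in\mathbb{Z}}\widehat V(2k)e^{i2k\pi x}$ be a 1-periodic complex-valued distribution, regarded both as an element of $H_{per}^{-m}$ (with $\widehat V(2k+1)=0$ for all $k$) and of $H_+^{-m}$. Let $S(V)=D^{2m}\dotplus V$ on $L_2(-1,1)$ and $S_{\pm}(V)=D_{\pm}^{2m}\dotplus V$ on $L_2(0,1)$ be the corresponding $m$-sectorial form-sum operators. Then, under the decomposition $L_2(-1,1)=H^0_{per,+}\oplus H^0_{per,-}$ and the identifications $I_\pm:L_2(0,1)=H_\pm^0\to H^0_{per,\pm}$, $$S(V)=S_{+}(V)\oplus S_{-}(V),$$ and consequently $$\mathrm{spec}(S)=\mathrm{spec}(S_{+})\cup\mathrm{spec}(S_{-}),$$ where $\mathrm{spec}$ denotes the discrete spectrum counted with algebraic multiplicities (the union being the union of multisets).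
   Context: For $s\in\mathbb{R}$: $H_{per}^{s}$ is the space of 2-periodic series $f=\sum_{k\in\mathbb{Z}}\widehat f(k)e^{ik\pi x}$ on $[-1,1]$ with $\|f\|^2=\sum_k\langle k\rangle^{2s}|\widehat f(k)|^2<\infty$; $H_{+}^{s}$ is the space of series $f=\sum_{k}\widehat f(2k)e^{i2k\pi x}$ on $[0,1]$ with $\sum_k\langle 2k\rangle^{2s}|\widehat f(2k)|^2<\infty$; $H_{-}^{s}$ is the space of series $f=\sum_{k}\widehat f(2k+1)e^{i(2k+1)\pi x}$ on $[0,1]$ with $\sum_k\langle 2k+1\rangle^{2s}|\widehat f(2k+1)|^2<\infty$; $\langle k\rangle=1+|k|$. $H_{per}^0=L_2(-1,1)$, $H_\pm^0=L_2(0,1)$. $H^s_{per,+}=\{f\in H^s_{per}:\widehat f(2k+1)=0\ \forall k\}$, $H^s_{per,-}=\{f\in H^s_{per}:\widehat f(2k)=0\ \forall k\}$, so $H^s_{per}=H^s_{per,+}\oplus H^s_{per,-}$. $I_\pm:H^s_\pm\to H^s_{per,\pm}$ extends an element on $[0,1]$, given by its Fourier series, to the same series on $[-1,1]$; these are isometric isomorphisms. $D=-i\,d/dx$ on $H^1_{per}$ and $D_\pm=-i\,d/dx$ on $H^1_\pm$; $D^{2m}=|D|^{2m}$, $D_\pm^{2m}=|D_\pm|^{2m}$ act as multiplication by $(n\pi)^{2m}$ on the mode $e^{in\pi x}$. Products $V(x)u$ are formal products of Fourier series: $V(x)u=\sum_n(\sum_j\widehat V(n-j)\widehat u(j))e^{in\pi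 x}$. $S(V)$ is the $m$-sectorial operator on $L_2(-1,1)$ associated with the closed sectorial form $\langle D^{2m}u,v\rangle+\langle Vu,v\rangle$ on $H^m_{per}$ (pairing extending the $L_2(-1,1)$ inner product), with $\mathrm{Dom}(S)=\{u\in H^m_{per}: D^{2m}u+Vu\in L_2(-1,1)\}$, $S(V)u=D^{2m}u+Vu$; $S_\pm(V)$ is the $m$-sectorial operator on $L_2(0,1)$ associated with the form $\langle D_{\pm}^{2m}u,v\rangle_{\pm}+\langle Vu,v\rangle_{\pm}$ on $H_\pm^m$, with $\mathrm{Dom}(S_{\pm})=\{u\in H_{\pm}^{m}\mid D_{\pm}^{2m}u+Vu\in L_{2}(0,1)\}$, $S_\pm(V)u=D_{\pm}^{2m}u+Vu$. The spectra of these operators are discrete; $\mathrm{spec}(A)$ lists the eigenvalues with algebraic multiplicity, ordered lexicographically (by real part, then imaginary part). *)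

theory Defs
  imports "HOL-Analysis.Analysis"
begin

text \<open>All function spaces are represented by Fourier coefficients, exactly as in the paper,
  where they are defined as spaces of Fourier series.
  An element of H_per^s is a coefficient function f :: int => complex, with f n the
  coefficient of exp(i n pi x) on [-1,1].
  An element of H_+^s is a :: int => complex, a k the coefficient of exp(i 2k pi x) on [0,1].
  An element of H_-^s is b :: int => complex, b k the coefficient of exp(i (2k+1) pi x) on [0,1].\<close>

definition jbr :: "int \<Rightarrow> real" where
  "jbr k = 1 + real_of_int \<bar>k\<bar>"

definition Hper :: "real \<Rightarrow> (int \<Rightarrow> complex) set" where
  "Hper s = {f. (\<lambda>n. jbr n powr (2 * s) * (cmod (f n))^2) summable_on UNIV}"

definition Hplus :: "real \<Rightarrow> (int \<Rightarrow> complex) set" where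
  "Hplus s = {a. (\<lambda>k. jbr (2*k) powr (2 * s) * (cmod (a k))^2) summable_on UNIV}"

definition Hminus :: "real \<Rightarrow> (int \<Rightarrow> complex) set" where
  "Hminus s = {b. (\<lambda>k. jbr (2*k+1) powr (2 * s) * (cmod (b k))^2) summable_on UNIV}"

text \<open>Extension maps I_+ : H_+ -> H_per,+ and I_- : H_- -> H_per,- (same series on [-1,1]).\<close>

definition Iplus :: "(int \<Rightarrow> complex) \<Rightarrow> (int \<Rightarrow> complex)" where
  "Iplus a = (\<lambda>n. if even n then a (n div 2) else 0)"

definition Iminus :: "(int \<Rightarrow> complex) \<Rightarrow> (int \<Rightarrow> complex)" where
  "Iminus b = (\<lambda>n. if odd n then b ((n - 1) div 2) else 0)"

text \<open>Formal products V u of Fourier series; Vh n is the coefficient of exp(i n pi x) in V.\<close>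

definition mult_per :: "(int \<Rightarrow> complex) \<Rightarrow> (int \<Rightarrow> complex) \<Rightarrow> (int \<Rightarrow> complex)" where
  "mult_per Vh u = (\<lambda>n. \<Sum>\<^sub>\<infinity>j. Vh (n - j) * u j)"

definition mult_plus :: "(int \<Rightarrow> complex) \<Rightarrow> (int \<Rightarrow> complex) \<Rightarrow> (int \<Rightarrow> complex)" where
  "mult_plus Vh a = (\<lambda>k. \<Sum>\<^sub>\<infinity>j. Vh (2*k - 2*j) * a j)"

definition mult_minus :: "(int \<Rightarrow> complex) \<Rightarrow> (int \<Rightarrow> complex) \<Rightarrow> (int \<Rightarrow> complex)" where
  "mult_minus Vh b = (\<lambda>k. \<Sum>\<^sub>\<infinity>j. Vh ((2*k+1) - (2*j+1)) * b j)"

definition S_per :: "nat \<Rightarrow> (int \<Rightarrow> complex) \<Rightarrow> (int \<Rightarrow> complex) \<Rightarrow> (int \<Rightarrow> complex)" where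
  "S_per m Vh u = (\<lambda>n. complex_of_real ((real_of_int n * pi) ^ (2*m)) * u n + mult_per Vh u n)"

definition S_per_dom :: "nat \<Rightarrow> (int \<Rightarrow> complex) \<Rightarrow> (int \<Rightarrow> complex) set" where
  "S_per_dom m Vh = {u \<in> Hper (real m). S_per m Vh u \<in> Hper 0}"

definition S_plus :: "nat \<Rightarrow> (int \<Rightarrow> complex) \<Rightarrow> (int \<Rightarrow> complex) \<Rightarrow> (int \<Rightarrow> complex)" where
  "S_plus m Vh a = (\<lambda>k. complex_of_real ((real_of_int (2*k) * pi) ^ (2*m)) * a k + mult_plus Vh a k)"

definition S_plus_dom :: "nat \<Rightarrow> (int \<Rightarrow> complex) \<Rightarrow> (int \<Rightarrow> complex) set" where
  "S_plus_dom m Vh = {a \<in> Hplus (real m). S_plus m Vh a \<in> Hplus 0}"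

definition S_minus :: "nat \<Rightarrow> (int \<Rightarrow> complex) \<Rightarrow> (int \<Rightarrow> complex) \<Rightarrow> (int \<Rightarrow> complex)" where
  "S_minus m Vh b = (\<lambda>k. complex_of_real ((real_of_int (2*k+1) * pi) ^ (2*m)) * b k + mult_minus Vh b k)"

definition S_minus_dom :: "nat \<Rightarrow> (int \<Rightarrow> complex) \<Rightarrow> (int \<Rightarrow> complex) set" where
  "S_minus_dom m Vh = {b \<in> Hminus (real m). S_minus m Vh b \<in> Hminus 0}"

definition shiftop :: "((int \<Rightarrow> complex) \<Rightarrow> (int \<Rightarrow> complex)) \<Rightarrow> complex \<Rightarrow> (int \<Rightarrow> complex) \<Rightarrow> (int \<Rightarrow> complex)" where
  "shiftop A z u = (\<lambda>n. A u n - z * u n)"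

definition gen_eigenspace :: "(int \<Rightarrow> complex) set \<Rightarrow> ((int \<Rightarrow> complex) \<Rightarrow> (int \<Rightarrow> complex)) \<Rightarrow> complex \<Rightarrow> (int \<Rightarrow> complex) set" where
  "gen_eigenspace D A z = {u. \<exists>k. (\<forall>i<k. (shiftop A z ^^ i) u \<in> D) \<and> (shiftop A z ^^ k) u = (\<lambda>n. 0)}"

definition lin_indep :: "(int \<Rightarrow> complex) set \<Rightarrow> bool" where
  "lin_indep F \<longleftrightarrow> (\<forall>c. (\<forall>n. (\<Sum>f\<in>F. c f * f n) = 0) \<longrightarrow> (\<forall>f\<in>F. c f = 0))"

definition alg_mult :: "(int \<Rightarrow> complex) set \<Rightarrow> ((int \<Rightarrow> complex) \<Rightarrow> (int \<Rightarrow> complex)) \<Rightarrow> complex \<Rightarrow> enat" where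
  "alg_mult D A z = (SUP F \<in> {F. finite F \<and> F \<subseteq> gen_eigenspace D A z \<and> lin_indep F}. enat (card F))"

end

theory Submission imports Defs "HOL-Library.Function_Algebras" begin

definition Ev :: "(int \<Rightarrow> complex) \<Rightarrow> (int \<Rightarrow> complex)" where
  "Ev u = (\<lambda>k. u (2*k))"
definition Od :: "(int \<Rightarrow> complex) \<Rightarrow> (int \<Rightarrow> complex)" where
  "Od u = (\<lambda>k. u (2*k+1))"

lemma recon: "u = (\<lambda>n. Iplus (Ev u) n + Iminus (Od u) n)"
proof
  fix n :: int
  show "u n = Iplus (Ev u) n + Iminus (Od u) n"
  proof (cases "even n")
    case True then show ?thesis by (auto simp: Iplus_def Iminus_def Ev_def)
  next
    case False
    then have "2 * ((n - 1) div 2) + 1 = n" by presburger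
    with False show ?thesis by (auto simp: Iplus_def Iminus_def Od_def)
  qed
qed

lemma Ev_I[simp]: "Ev (\<lambda>n. Iplus a n + Iminus b n) = a"
  by (auto simp: Ev_def Iplus_def Iminus_def)
lemma Od_I[simp]: "Od (\<lambda>n. Iplus a n + Iminus b n) = b"
proof -
  have "\<And>k::int. (2*k+1-1) div 2 = k" by presburger
  then show ?thesis by (auto simp: Od_def Iplus_def Iminus_def)
qed

lemma range_split: "(UNIV::int set) = range (\<lambda>k. 2*k) \<union> range (\<lambda>k. 2*k+1)"
proof -
  have "\<And>n::int. n \<in> range (\<lambda>k. 2*k) \<or> n \<in> range (\<lambda>k. 2*k+1)"
  proof -
    fix n :: int
    have "n = 2*(n div 2) \<or> n = 2*(n div 2)+1" by presburger
    then show "n \<in> range (\<lambda>k. 2*k) \<or> n \<in> range (\<lambda>k. 2*k+1)" by blast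
  qed
  then show ?thesis by blast
qed
lemma range_disj: "range (\<lambda>k::int. 2*k) \<inter> range (\<lambda>k. 2*k+1) = {}"
  by (auto, presburger)

lemma summable_split:
  fixes f :: "int \<Rightarrow> real"
  shows "f summable_on UNIV \<longleftrightarrow> (\<lambda>k. f (2*k)) summable_on UNIV \<and> (\<lambda>k. f (2*k+1)) summable_on UNIV"
proof -
  have i1: "inj (\<lambda>k::int. 2*k)" by (auto simp: inj_def)
  have i2: "inj (\<lambda>k::int. 2*k+1)" by (auto simp: inj_def)
  have a: "f summable_on range (\<lambda>k. 2*k) \<longleftrightarrow> (\<lambda>k. f (2*k)) summable_on UNIV"
    using summable_on_reindex[OF i1, of f] by (simp add: o_def)
  have b: "f summable_on range (\<lambda>k. 2*k+1) \<longleftrightarrow> (\<lambda>k. f (2*k+1)) summable_on UNIV"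
    using summable_on_reindex[OF i2, of f] by (simp add: o_def)
  show ?thesis
  proof
    assume "f summable_on UNIV"
    then show "(\<lambda>k. f (2*k)) summable_on UNIV \<and> (\<lambda>k. f (2*k+1)) summable_on UNIV"
      using a b summable_on_subset_banach by blast
  next
    assume "(\<lambda>k. f (2*k)) summable_on UNIV \<and> (\<lambda>k. f (2*k+1)) summable_on UNIV"
    then have "f summable_on (range (\<lambda>k. 2*k) \<union> range (\<lambda>k. 2*k+1))"
      using a b summable_on_Un_disjoint[OF _ _ range_disj] by blast
    then show "f summable_on UNIV" using range_split by simp
  qed
qed

lemma Hper_split: "u \<in> Hper s \<longleftrightarrow> Ev u \<in> Hplus s \<and> Od u \<in> Hminus s"
  unfolding Hper_def Hplus_def Hminus_def Ev_def Od_def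
  using summable_split[of "\<lambda>n. jbr n powr (2 * s) * (cmod (u n))^2"] by simp

lemma mult_even:
  assumes odd0: "\<And>k. Vh (2*k+1) = 0"
  shows "mult_per Vh u (2*k) = mult_plus Vh (Ev u) k"
proof -
  have i1: "inj (\<lambda>k::int. 2*k)" by (auto simp: inj_def)
  have z: "Vh (2*k - j) * u j = 0" if "j \<notin> range (\<lambda>i. 2*i)" for j
  proof -
    have "odd j"
    proof
      assume "even j" then have "j = 2*(j div 2)" by presburger
      with that show False by blast
    qed
    then have "2*k - j = 2*((2*k-j-1) div 2) + 1" by presburger
    then have "Vh (2*k - j) = 0" using odd0 by metis
    then show ?thesis by simp
  qed
  have "mult_per Vh u (2*k) = (\<Sum>\<^sub>\<infinity>j\<in>range (\<lambda>i. 2*i). Vh (2*k - j) * u j)"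
    unfolding mult_per_def by (rule infsum_cong_neutral) (use z in auto)
  also have "\<dots> = (\<Sum>\<^sub>\<infinity>i. Vh (2*k - 2*i) * u (2*i))"
    using infsum_reindex[OF i1, of "\<lambda>j. Vh (2*k - j) * u j"] by (simp add: o_def)
  finally show ?thesis by (simp add: mult_plus_def Ev_def)
qed

lemma mult_odd:
  assumes odd0: "\<And>k. Vh (2*k+1) = 0"
  shows "mult_per Vh u (2*k+1) = mult_minus Vh (Od u) k"
proof -
  have i1: "inj (\<lambda>k::int. 2*k+1)" by (auto simp: inj_def)
  have z: "Vh (2*k+1 - j) * u j = 0" if "j \<notin> range (\<lambda>i. 2*i+1)" for j
  proof -
    have "even j"
    proof (rule ccontr)
      assume "odd j" then have "j = 2*((j-1) div 2)+1" by presburger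
      with that show False by blast
    qed
    then have "2*k+1 - j = 2*((2*k-j) div 2) + 1" by presburger
    then have "Vh (2*k+1 - j) = 0" using odd0 by metis
    then show ?thesis by simp
  qed
  have "mult_per Vh u (2*k+1) = (\<Sum>\<^sub>\<infinity>j\<in>range (\<lambda>i. 2*i+1). Vh (2*k+1 - j) * u j)"
    unfolding mult_per_def by (rule infsum_cong_neutral) (use z in auto)
  also have "\<dots> = (\<Sum>\<^sub>\<infinity>i. Vh (2*k+1 - (2*i+1)) * u (2*i+1))"
    using infsum_reindex[OF i1, of "\<lambda>j. Vh (2*k+1 - j) * u j"] by (simp add: o_def)
  finally show ?thesis by (simp add: mult_minus_def Od_def)
qed

lemma S_Ev:
  assumes "\<And>k. Vh (2*k+1) = 0"
  shows "Ev (S_per m Vh u) = S_plus m Vh (Ev u)"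
  using mult_even[of Vh, OF assms] by (simp add: Ev_def S_per_def S_plus_def)

lemma S_Od:
  assumes "\<And>k. Vh (2*k+1) = 0"
  shows "Od (S_per m Vh u) = S_minus m Vh (Od u)"
  using mult_odd[of Vh, OF assms] by (simp add: Od_def S_per_def S_minus_def)

lemma dom_split:
  assumes "\<And>k. Vh (2*k+1) = 0"
  shows "u \<in> S_per_dom m Vh \<longleftrightarrow> Ev u \<in> S_plus_dom m Vh \<and> Od u \<in> S_minus_dom m Vh"
  unfolding S_per_dom_def S_plus_dom_def S_minus_dom_def
  using Hper_split[of u] Hper_split[of "S_per m Vh u"] S_Ev[of Vh, OF assms] S_Od[of Vh, OF assms] by auto

lemma shift1_Ev:
  assumes "\<And>k. Vh (2*k+1) = 0"
  shows "Ev (shiftop (S_per m Vh) z w) = shiftop (S_plus m Vh) z (Ev w)"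
proof -
  have "Ev (shiftop (S_per m Vh) z w) = (\<lambda>k. Ev (S_per m Vh w) k - z * Ev w k)"
    by (simp add: shiftop_def Ev_def)
  also have "\<dots> = shiftop (S_plus m Vh) z (Ev w)"
    unfolding S_Ev[of Vh, OF assms] by (simp add: shiftop_def)
  finally show ?thesis .
qed

lemma shift1_Od:
  assumes "\<And>k. Vh (2*k+1) = 0"
  shows "Od (shiftop (S_per m Vh) z w) = shiftop (S_minus m Vh) z (Od w)"
proof -
  have "Od (shiftop (S_per m Vh) z w) = (\<lambda>k. Od (S_per m Vh w) k - z * Od w k)"
    by (simp add: shiftop_def Od_def)
  also have "\<dots> = shiftop (S_minus m Vh) z (Od w)"
    unfolding S_Od[of Vh, OF assms] by (simp add: shiftop_def)
  finally show ?thesis .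
qed

lemma shift_Ev:
  assumes "\<And>k. Vh (2*k+1) = 0"
  shows "Ev ((shiftop (S_per m Vh) z ^^ i) u) = (shiftop (S_plus m Vh) z ^^ i) (Ev u)"
  by (induction i) (simp_all add: shift1_Ev[of Vh, OF assms])

lemma shift_Od:
  assumes "\<And>k. Vh (2*k+1) = 0"
  shows "Od ((shiftop (S_per m Vh) z ^^ i) u) = (shiftop (S_minus m Vh) z ^^ i) (Od u)"
  by (induction i) (simp_all add: shift1_Od[of Vh, OF assms])

lemma iter_zero:
  fixes A :: "'a::zero \<Rightarrow> 'a"
  assumes "A 0 = 0" "(A ^^ k) a = 0" "k \<le> i"
  shows "(A ^^ i) a = 0"
proof -
  have z: "(A ^^ j) 0 = 0" for j
  proof (induction j)
    case 0 show ?case by simp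
  next
    case (Suc j) then show ?case using assms(1) by simp
  qed
  have "i = (i - k) + k" using assms(3) by simp
  then have "(A ^^ i) a = (A ^^ (i-k)) ((A ^^ k) a)" by (metis funpow_add o_apply)
  then show ?thesis using assms(2) z by simp
qed


lemma gen_mono_k:
  fixes A :: "'a::zero \<Rightarrow> 'a"
  assumes "A 0 = 0" "0 \<in> D" "\<forall>i<k. (A ^^ i) a \<in> D" "(A ^^ k) a = 0" "k \<le> k'"
  shows "(\<forall>i<k'. (A ^^ i) a \<in> D) \<and> (A ^^ k') a = 0"
  using assms iter_zero[of A k a] by (metis not_le)

lemma Splus0: "S_plus m Vh (\<lambda>n. 0) = (\<lambda>n. 0)"
  by (simp add: S_plus_def mult_plus_def)
lemma Sminus0: "S_minus m Vh (\<lambda>n. 0) = (\<lambda>n. 0)"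
  by (simp add: S_minus_def mult_minus_def)
lemma shp0: "shiftop (S_plus m Vh) z 0 = 0"
  using Splus0 by (simp add: shiftop_def zero_fun_def)
lemma shm0: "shiftop (S_minus m Vh) z 0 = 0"
  using Sminus0 by (simp add: shiftop_def zero_fun_def)
lemma dp0: "0 \<in> S_plus_dom m Vh"
  using Splus0 by (simp add: S_plus_dom_def Hplus_def zero_fun_def)
lemma dm0: "0 \<in> S_minus_dom m Vh"
  using Sminus0 by (simp add: S_minus_dom_def Hminus_def zero_fun_def)

lemma zero_split: "u = 0 \<longleftrightarrow> Ev u = 0 \<and> Od u = 0"
proof
  assume "u = 0" then show "Ev u = 0 \<and> Od u = 0" by (simp add: Ev_def Od_def zero_fun_def)
next
  assume H: "Ev u = 0 \<and> Od u = 0"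
  have "u = (\<lambda>n. Iplus (Ev u) n + Iminus (Od u) n)" by (rule recon)
  also have "\<dots> = 0" using H by (simp add: Iplus_def Iminus_def zero_fun_def)
  finally show "u = 0" .
qed

lemma gen_split:
  assumes o: "\<And>k. Vh (2*k+1) = 0"
  shows "u \<in> gen_eigenspace (S_per_dom m Vh) (S_per m Vh) z \<longleftrightarrow>
     Ev u \<in> gen_eigenspace (S_plus_dom m Vh) (S_plus m Vh) z \<and>
     Od u \<in> gen_eigenspace (S_minus_dom m Vh) (S_minus m Vh) z"
    (is "?L \<longleftrightarrow> ?R")
proof
  assume ?L
  then obtain k where k: "\<forall>i<k. (shiftop (S_per m Vh) z ^^ i) u \<in> S_per_dom m Vh"
    "(shiftop (S_per m Vh) z ^^ k) u = (\<lambda>n. 0)" unfolding gen_eigenspace_def by blast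
  have z: "Ev ((shiftop (S_per m Vh) z ^^ k) u) = 0 \<and> Od ((shiftop (S_per m Vh) z ^^ k) u) = 0"
    using k(2) zero_split[of "(shiftop (S_per m Vh) z ^^ k) u"] by (simp add: zero_fun_def)
  have d: "\<forall>i<k. (shiftop (S_plus m Vh) z ^^ i) (Ev u) \<in> S_plus_dom m Vh \<and>
       (shiftop (S_minus m Vh) z ^^ i) (Od u) \<in> S_minus_dom m Vh"
  proof (intro allI impI)
    fix i assume "i < k"
    then have "(shiftop (S_per m Vh) z ^^ i) u \<in> S_per_dom m Vh" using k(1) by blast
    then show "(shiftop (S_plus m Vh) z ^^ i) (Ev u) \<in> S_plus_dom m Vh \<and>
       (shiftop (S_minus m Vh) z ^^ i) (Od u) \<in> S_minus_dom m Vh"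
      using dom_split[of Vh, OF o] by (simp only: shift_Ev[of Vh, OF o] shift_Od[of Vh, OF o])
  qed
  have e: "(shiftop (S_plus m Vh) z ^^ k) (Ev u) = (\<lambda>n. 0)"
    using z by (simp only: shift_Ev[of Vh, OF o] zero_fun_def)
  have f: "(shiftop (S_minus m Vh) z ^^ k) (Od u) = (\<lambda>n. 0)"
    using z by (simp only: shift_Od[of Vh, OF o] zero_fun_def)
  show ?R unfolding gen_eigenspace_def using d e f by blast
next
  assume ?R
  then obtain k1 k2 where k1: "\<forall>i<k1. (shiftop (S_plus m Vh) z ^^ i) (Ev u) \<in> S_plus_dom m Vh"
    "(shiftop (S_plus m Vh) z ^^ k1) (Ev u) = 0"
    and k2: "\<forall>i<k2. (shiftop (S_minus m Vh) z ^^ i) (Od u) \<in> S_minus_dom m Vh"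
    "(shiftop (S_minus m Vh) z ^^ k2) (Od u) = 0"
    unfolding gen_eigenspace_def zero_fun_def by blast
  define k where "k = max k1 k2"
  have a: "(\<forall>i<k. (shiftop (S_plus m Vh) z ^^ i) (Ev u) \<in> S_plus_dom m Vh) \<and>
     (shiftop (S_plus m Vh) z ^^ k) (Ev u) = 0"
    by (rule gen_mono_k[OF shp0 dp0 k1]) (simp add: k_def)
  have b: "(\<forall>i<k. (shiftop (S_minus m Vh) z ^^ i) (Od u) \<in> S_minus_dom m Vh) \<and>
     (shiftop (S_minus m Vh) z ^^ k) (Od u) = 0"
    by (rule gen_mono_k[OF shm0 dm0 k2]) (simp add: k_def)
  have "\<forall>i<k. (shiftop (S_per m Vh) z ^^ i) u \<in> S_per_dom m Vh"
    using a b by (simp only: dom_split[of Vh, OF o] shift_Ev[of Vh, OF o] shift_Od[of Vh, OF o]) blast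
  moreover have "(shiftop (S_per m Vh) z ^^ k) u = 0"
    using a b by (simp only: zero_split[of "(shiftop (S_per m Vh) z ^^ k) u"] shift_Ev[of Vh, OF o] shift_Od[of Vh, OF o])
  ultimately show ?L unfolding gen_eigenspace_def zero_fun_def by blast
qed

definition sc :: "complex \<Rightarrow> (int \<Rightarrow> complex) \<Rightarrow> (int \<Rightarrow> complex)" where
  "sc c f = (\<lambda>n. c * f n)"

interpretation fv: vector_space sc
  by unfold_locales (auto simp: sc_def fun_eq_iff algebra_simps)

interpretation lp: Vector_Spaces.linear sc sc Iplus
  by unfold_locales (auto simp: sc_def fun_eq_iff Iplus_def)
interpretation lm: Vector_Spaces.linear sc sc Iminus
  by unfold_locales (auto simp: sc_def fun_eq_iff Iminus_def)

lemma sum_apply_sc: "(\<Sum>f\<in>F. sc (c f) f) n = (\<Sum>f\<in>F. c f * f n)"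
  by (induction F rule: infinite_finite_induct) (auto simp: sc_def)

lemma lin_indep_iff: "finite F \<Longrightarrow> lin_indep F \<longleftrightarrow> fv.independent F"
  unfolding lin_indep_def fv.dependent_finite
  by (auto simp: fun_eq_iff sum_apply_sc)

lemma Ev_Ip[simp]: "Ev (Iplus a) = a" and Od_Ip[simp]: "Od (Iplus a) = 0"
  and Ev_Im[simp]: "Ev (Iminus b) = 0" and Od_Im[simp]: "Od (Iminus b) = b"
proof -
  have "\<And>k::int. (2*k+1-1) div 2 = k" by presburger
  then show "Ev (Iplus a) = a" "Od (Iplus a) = 0" "Ev (Iminus b) = 0" "Od (Iminus b) = b"
    by (auto simp: Iplus_def Iminus_def Ev_def Od_def fun_eq_iff)
qed

lemma recon2: "u = Iplus (Ev u) + Iminus (Od u)"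
  using recon[of u] by (simp add: plus_fun_def)

lemma enat_sup_add:
  fixes A B :: "enat set"
  assumes le: "\<And>x y. x \<in> A \<Longrightarrow> y \<in> B \<Longrightarrow> x + y \<le> C" and ne: "A \<noteq> {}" "B \<noteq> {}"
  shows "Sup A + Sup B \<le> C"
proof (cases C)
  case infinity then show ?thesis by simp
next
  case (enat c)
  obtain y0 where y0: "y0 \<in> B" using ne by blast
  obtain x0 where x0: "x0 \<in> A" using ne by blast
  have fA: "finite A"
    by (rule finite_enat_bounded[of _ c]) (metis enat le y0 le_iff_add order_trans)
  have fB: "finite B"
    by (rule finite_enat_bounded[of _ c]) (metis enat le x0 le_iff_add add.commute order_trans)
  have "Sup A \<in> A" using fA ne by (simp add: Sup_enat_def)
  moreover have "Sup B \<in> B" using fB ne by (simp add: Sup_enat_def)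
  ultimately show ?thesis using le by blast
qed

definition amX :: "(int \<Rightarrow> complex) set \<Rightarrow> enat" where
  "amX X = (SUP F \<in> {F. finite F \<and> F \<subseteq> X \<and> lin_indep F}. enat (card F))"

lemma alg_mult_amX: "alg_mult D A z = amX (gen_eigenspace D A z)"
  by (simp add: alg_mult_def amX_def)

lemma amX_ge: "finite F \<Longrightarrow> F \<subseteq> X \<Longrightarrow> lin_indep F \<Longrightarrow> enat (card F) \<le> amX X"
  unfolding amX_def by (rule SUP_upper) auto

lemma lin_indep_no0: "lin_indep F \<Longrightarrow> 0 \<notin> F"
  unfolding lin_indep_def
proof
  assume H: "\<forall>c. (\<forall>n. (\<Sum>f\<in>F. c f * f n) = 0) \<longrightarrow> (\<forall>f\<in>F. c f = 0)" and z: "0 \<in> F"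
  have "\<forall>n. (\<Sum>f\<in>F. (if f = 0 then 1 else 0) * f n) = 0"
    by (auto intro!: sum.neutral)
  then have "\<forall>f\<in>F. (if f = 0 then 1 else 0) = (0::complex)"
    using H[rule_format, of "\<lambda>g. if g = 0 then 1 else 0"] by blast
  then show False using z by fastforce
qed

lemma amX_split:
  assumes G: "\<And>u. u \<in> G \<longleftrightarrow> Ev u \<in> Gp \<and> Od u \<in> Gm"
    and z: "0 \<in> Gp" "0 \<in> Gm"
  shows "amX G = amX Gp + amX Gm"
proof (rule antisym)
  show "amX G \<le> amX Gp + amX Gm"
    unfolding amX_def[of G]
  proof (rule SUP_least)
    fix F assume "F \<in> {F. finite F \<and> F \<subseteq> G \<and> lin_indep F}"
    then have F: "finite F" "F \<subseteq> G" "lin_indep F" by auto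
    then have iF: "fv.independent F" using lin_indep_iff by blast
    obtain B1 where B1: "B1 \<subseteq> Ev ` F" "fv.independent B1" "Ev ` F \<subseteq> fv.span B1" "card B1 = fv.dim (Ev ` F)"
      using fv.basis_exists by blast
    obtain B2 where B2: "B2 \<subseteq> Od ` F" "fv.independent B2" "Od ` F \<subseteq> fv.span B2" "card B2 = fv.dim (Od ` F)"
      using fv.basis_exists by blast
    have fB1: "finite B1" using B1(1) F(1) finite_subset by blast
    have fB2: "finite B2" using B2(1) F(1) finite_subset by blast
    have "Ev ` F \<subseteq> Gp" "Od ` F \<subseteq> Gm" using F(2) G by auto
    then have s1: "B1 \<subseteq> Gp" and s2: "B2 \<subseteq> Gm" using B1(1) B2(1) by auto
    have c1: "enat (card B1) \<le> amX Gp"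
      by (rule amX_ge[OF fB1 s1]) (use B1(2) lin_indep_iff[OF fB1] in simp)
    have c2: "enat (card B2) \<le> amX Gm"
      by (rule amX_ge[OF fB2 s2]) (use B2(2) lin_indep_iff[OF fB2] in simp)
    have sub: "F \<subseteq> fv.span (Iplus ` B1 \<union> Iminus ` B2)"
    proof
      fix f assume "f \<in> F"
      then have "Ev f \<in> fv.span B1" "Od f \<in> fv.span B2" using B1(3) B2(3) by auto
      then have m1: "Iplus (Ev f) \<in> fv.span (Iplus ` B1)" and m2: "Iminus (Od f) \<in> fv.span (Iminus ` B2)"
        using lp.span_image[of B1] lm.span_image[of B2] by auto
      have "fv.span (Iplus ` B1) \<subseteq> fv.span (Iplus ` B1 \<union> Iminus ` B2)"
        "fv.span (Iminus ` B2) \<subseteq> fv.span (Iplus ` B1 \<union> Iminus ` B2)"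
        by (rule fv.span_mono, blast)+
      with m1 m2 have "Iplus (Ev f) + Iminus (Od f) \<in> fv.span (Iplus ` B1 \<union> Iminus ` B2)"
        by (intro fv.span_add) auto
      then show "f \<in> fv.span (Iplus ` B1 \<union> Iminus ` B2)" using recon2[of f] by simp
    qed
    have "card F = fv.dim F" using fv.dim_eq_card_independent[OF iF] by simp
    also have "\<dots> \<le> card (Iplus ` B1 \<union> Iminus ` B2)"
      by (rule fv.dim_le_card[OF sub]) (use fB1 fB2 in simp)
    also have "\<dots> \<le> card B1 + card B2"
      using card_Un_le[of "Iplus ` B1" "Iminus ` B2"] card_image_le[OF fB1, of Iplus]
        card_image_le[OF fB2, of Iminus] by linarith
    finally have "enat (card F) \<le> enat (card B1) + enat (card B2)" by simp
    also have "\<dots> \<le> amX Gp + amX Gm" using c1 c2 by (rule add_mono)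
    finally show "enat (card F) \<le> amX Gp + amX Gm" .
  qed
next
  let ?S = "\<lambda>X. {F. finite F \<and> F \<subseteq> X \<and> lin_indep F}"
  have ne: "{} \<in> ?S X" for X by (simp add: lin_indep_def)
  show "amX Gp + amX Gm \<le> amX G"
    unfolding amX_def[of Gp] amX_def[of Gm]
  proof (rule enat_sup_add)
    show "(\<lambda>F. enat (card F)) ` ?S Gp \<noteq> {}" "(\<lambda>F. enat (card F)) ` ?S Gm \<noteq> {}" using ne by blast+
    fix x y assume "x \<in> (\<lambda>F. enat (card F)) ` ?S Gp" "y \<in> (\<lambda>F. enat (card F)) ` ?S Gm"
    then obtain Fp Fm where Fp: "finite Fp" "Fp \<subseteq> Gp" "lin_indep Fp" and Fm: "finite Fm" "Fm \<subseteq> Gm" "lin_indep Fm"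
      and xy: "x = enat (card Fp)" "y = enat (card Fm)" by auto
    define F where "F = Iplus ` Fp \<union> Iminus ` Fm"
    have injp: "inj Iplus" by (metis Ev_Ip injI)
    have injm: "inj Iminus" by (metis Od_Im injI)
    have disj: "Iplus ` Fp \<inter> Iminus ` Fm = {}"
    proof (rule ccontr)
      assume "Iplus ` Fp \<inter> Iminus ` Fm \<noteq> {}"
      then obtain a b where ab: "a \<in> Fp" "b \<in> Fm" "Iplus a = Iminus b" by auto
      then have "a = 0" by (metis Ev_Im Ev_Ip)
      then show False using ab(1) lin_indep_no0[OF Fp(3)] by simp
    qed
    have fF: "finite F" using Fp Fm by (simp add: F_def)
    have cF: "card F = card Fp + card Fm"
      unfolding F_def using card_Un_disjoint[OF _ _ disj] Fp(1) Fm(1)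
        card_image[OF inj_on_subset[OF injp]] card_image[OF inj_on_subset[OF injm]] by simp
    have sG: "F \<subseteq> G" using Fp(2) Fm(2) z G by (auto simp: F_def)
    have iF: "lin_indep F" unfolding lin_indep_def
    proof (intro allI impI ballI)
      fix c f assume H: "\<forall>n. (\<Sum>f\<in>F. c f * f n) = 0" and f: "f \<in> F"
      have spl: "(\<Sum>f\<in>F. c f * f n) = (\<Sum>a\<in>Fp. c (Iplus a) * Iplus a n) + (\<Sum>b\<in>Fm. c (Iminus b) * Iminus b n)" for n
      proof -
        have "(\<Sum>f\<in>F. c f * f n) = (\<Sum>f\<in>Iplus ` Fp. c f * f n) + (\<Sum>f\<in>Iminus ` Fm. c f * f n)"
          unfolding F_def by (rule sum.union_disjoint[OF _ _ disj]) (use Fp(1) Fm(1) in auto)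
        also have "(\<Sum>f\<in>Iplus ` Fp. c f * f n) = (\<Sum>a\<in>Fp. c (Iplus a) * Iplus a n)"
          using sum.reindex[OF inj_on_subset[OF injp], of Fp "\<lambda>f. c f * f n"] by simp
        also have "(\<Sum>f\<in>Iminus ` Fm. c f * f n) = (\<Sum>b\<in>Fm. c (Iminus b) * Iminus b n)"
          using sum.reindex[OF inj_on_subset[OF injm], of Fm "\<lambda>f. c f * f n"] by simp
        finally show ?thesis .
      qed
      have "\<forall>k. (\<Sum>a\<in>Fp. c (Iplus a) * a k) = 0"
      proof
        fix k
        have "(\<Sum>f\<in>F. c f * f (2*k)) = 0" using H by blast
        moreover have "Iplus a (2*k) = a k" for a using Ev_Ip[of a] by (simp add: Ev_def fun_eq_iff)
        moreover have "Iminus b (2*k) = 0" for b using Ev_Im[of b] by (simp add: Ev_def fun_eq_iff)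
        ultimately show "(\<Sum>a\<in>Fp. c (Iplus a) * a k) = 0" using spl[of "2*k"] by simp
      qed
      then have cp: "\<forall>a\<in>Fp. c (Iplus a) = 0" using Fp(3)[unfolded lin_indep_def, rule_format, of "\<lambda>a. c (Iplus a)"]
        by blast
      have "\<forall>k. (\<Sum>b\<in>Fm. c (Iminus b) * b k) = 0"
      proof
        fix k
        have "(\<Sum>f\<in>F. c f * f (2*k+1)) = 0" using H by blast
        moreover have "Iplus a (2*k+1) = 0" for a using Od_Ip[of a] by (simp add: Od_def fun_eq_iff)
        moreover have "Iminus b (2*k+1) = b k" for b using Od_Im[of b] by (simp add: Od_def fun_eq_iff)
        ultimately show "(\<Sum>b\<in>Fm. c (Iminus b) * b k) = 0" using spl[of "2*k+1"] by simp
      qed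
      then have cm: "\<forall>b\<in>Fm. c (Iminus b) = 0" using Fm(3)[unfolded lin_indep_def, rule_format, of "\<lambda>b. c (Iminus b)"]
        by blast
      show "c f = 0" using f cp cm by (auto simp: F_def)
    qed
    have "enat (card F) \<le> amX G" by (rule amX_ge[OF fF sG iF])
    then show "x + y \<le> amX G" using cF xy by simp
  qed
qed

lemma gen0: "(0::int\<Rightarrow>complex) \<in> gen_eigenspace D A z"
  unfolding gen_eigenspace_def by (rule CollectI, rule exI[of _ 0]) (simp add: zero_fun_def)

theorem theorem6:
  fixes m :: nat and Vh :: "int \<Rightarrow> complex"
  assumes "Vh \<in> Hper (- real m)"
    and "\<And>k. Vh (2*k+1) = 0"
  shows "S_per_dom m Vh =
           {(\<lambda>n. Iplus a n + Iminus b n) | a b. a \<in> S_plus_dom m Vh \<and> b \<in> S_minus_dom m Vh}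
    \<and> (\<forall>a \<in> S_plus_dom m Vh. \<forall>b \<in> S_minus_dom m Vh.
         S_per m Vh (\<lambda>n. Iplus a n + Iminus b n)
           = (\<lambda>n. Iplus (S_plus m Vh a) n + Iminus (S_minus m Vh b) n))
    \<and> (\<forall>z. alg_mult (S_per_dom m Vh) (S_per m Vh) z
           = alg_mult (S_plus_dom m Vh) (S_plus m Vh) z
             + alg_mult (S_minus_dom m Vh) (S_minus m Vh) z)"
proof (intro conjI ballI allI)
  show "S_per_dom m Vh =
           {(\<lambda>n. Iplus a n + Iminus b n) | a b. a \<in> S_plus_dom m Vh \<and> b \<in> S_minus_dom m Vh}"
  proof
    show "S_per_dom m Vh \<subseteq> {(\<lambda>n. Iplus a n + Iminus b n) | a b. a \<in> S_plus_dom m Vh \<and> b \<in> S_minus_dom m Vh}"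
    proof
      fix u assume "u \<in> S_per_dom m Vh"
      then have "Ev u \<in> S_plus_dom m Vh" "Od u \<in> S_minus_dom m Vh" using dom_split[of Vh, OF assms(2)] by auto
      then show "u \<in> {(\<lambda>n. Iplus a n + Iminus b n) | a b. a \<in> S_plus_dom m Vh \<and> b \<in> S_minus_dom m Vh}"
        using recon[of u] by blast
    qed
  next
    show "{(\<lambda>n. Iplus a n + Iminus b n) | a b. a \<in> S_plus_dom m Vh \<and> b \<in> S_minus_dom m Vh} \<subseteq> S_per_dom m Vh"
      using dom_split[of Vh, OF assms(2)] by auto
  qed
next
  fix a b
  let ?u = "\<lambda>n. Iplus a n + Iminus b n"
  have "S_per m Vh ?u = (\<lambda>n. Iplus (Ev (S_per m Vh ?u)) n + Iminus (Od (S_per m Vh ?u)) n)"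
    by (rule recon)
  also have "\<dots> = (\<lambda>n. Iplus (S_plus m Vh a) n + Iminus (S_minus m Vh b) n)"
    by (simp only: S_Ev[of Vh, OF assms(2)] S_Od[of Vh, OF assms(2)] Ev_I Od_I)
  finally show "S_per m Vh ?u = (\<lambda>n. Iplus (S_plus m Vh a) n + Iminus (S_minus m Vh b) n)" .
next
  fix z
  show "alg_mult (S_per_dom m Vh) (S_per m Vh) z
           = alg_mult (S_plus_dom m Vh) (S_plus m Vh) z
             + alg_mult (S_minus_dom m Vh) (S_minus m Vh) z"
    unfolding alg_mult_amX
    by (rule amX_split[OF gen_split[of Vh, OF assms(2)] gen0 gen0])
qed

end
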